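(* For every $z_j\in Z_\theta$ and every $t=0,1,\dots,T-2$, $$\bar\psi_t(\theta,z_j)\le\gamma_t\theta+\theta\sum_{n=1}^{T-1-t}\alpha^n\gamma_{t+n}\prod_{m=0}^{n-1}F_{t+m}\big(z_j+(m+1)\theta-s_{t+m+1}\big).$$
   Context: Model. Fix an integer horizon $T\ge 2$, a discount factor $\alpha\in(0,1]$, and for $t=0,\dots,T-1$: unit ordering costs $c_t\in\mathbb R$, a salvage coefficient $c_T\in\mathbb R$, setup costs $K_t\ge 0$, functions $G_t:\mathbb R\to\mathbb R$, and independent nonnegative random demands $D_0,\dots,D_{T-1}$ with right-continuous distribution functions $F_t$ and finite means; all expectations appearing are assumed finite. Put $C_t(y)=(c_t-\alpha c_{t+1})y+G_t(y)+\alpha c_{t+1}E[D_t]$. Standing assumptions: (i) each $C_t$ is convex with $C_t(y)\to+\infty$ as $|y|\to\infty$; (ii) $K_t\ge \alpha K_{t+1}$ for $t=0,\dots,T-2$; (iii) there are constants $\gamma_t\ge 0$ with $|C_t(x)-C_t(y)|\le\gamma_t|x-y|$ for all $x,y$. Grid construction. Fix $\theta>0$, $z_m=m\theta$, $Z_\theta=\{z_m:m\in\mathbb Z\}$, $f_t(n)=F_t(z_{n+1})-F_t(z_n)$ ($n\ge -1$). $C^m_t=\min\{y: C_t(y)=\min_x C_t(x)\}$; with $z_{n_0}<C^m_t\le z_{n_0+1}$, $S^U_t=\min\{z_m\in Z_\theta: z_m\ge C^m_t,\ C_t(z_m)>C_t(z_{n_0})+K_t\}$. $s_{T-1}$ is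 a point with $s_{T-1}\le C^m_{T-1}$, $C_{T-1}(s_{T-1})=C_{T-1}(C^m_{T-1})+K_{T-1}$; $\bar I_{T-1}=s_{T-1}$. For $t=T-2,\dots,0$: $I_t=\max\{z_m\in Z_\theta: z_m<\min(\bar I_{t+1}-\theta,C^m_t)\}$, $\bar I_t=\max\{z_m\in Z_\theta: z_m\le I_t,\ C_t(z_m)>C_t(I_t)+K_t\}+\theta$. $H_{T-1}=C_{T-1}$, $S_{T-1}=C^m_{T-1}$; $V_t(y)=H_t(S_t)+K_t$ for $y<s_t$, $V_t(y)=H_t(y)$ for $y\ge s_t$. For $t=T-2,\dots,0$: $H_t(y)=C_t(y)+\alpha\sum_{n=-1}^\infty V_{t+1}(y-z_n)f_t(n)$; $S_t=\max\{z_m\in Z_\theta: I_t\le z_m\le S^U_t,\ H_t(z_m)=\min\{H_t(z_n):z_n\in Z_\theta, I_t\le z_n\le S^U_t\}\}$; $s_t=S_t$ if $K_t=0$, else $s_t=\min\{z_m\in Z_\theta:\bar I_t\le z_m\le S_t,\ H_t(z_m)\le H_t(S_t)+K_t\}$. Upper estimate functions. $\bar\psi_{T-1}(x,y)=\gamma_{T-1}x$; $\bar\varphi_{T-1}(x,y)=0$ if $y<s_{T-1}$ and $=\gamma_{T-1}x$ if $y\ge s_{T-1}$. For $t=0,\dots,T-2$, with $n$ the integer such that $z_{n-1}\le y-s_{t+1}<z_n$: $\bar\psi_t(x,y)=\gamma_tx$ if $y<s_{t+1}-\theta$, else $\bar\psi_t(x,y)=\gamma_tx+\alpha\sum_{m=-1}^{n-1}\bar\varphi_{t+1}(x,y-z_m)f_t(m)$;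 $\bar\varphi_t(x,y)=0$ if $y<s_t$, $=\bar\psi_t(y-s_t+\theta,y)$ if $y\ge s_t$ and $y-x<s_t$, $=\bar\psi_t(x,y)$ if $y\ge s_t$ and $y-x\ge s_t$. *)

theory Defs
  imports "HOL-Probability.Probability"
begin

definition zg :: "real \<Rightarrow> int \<Rightarrow> real" where
  "zg \<theta> m = of_int m * \<theta>"

definition Zg :: "real \<Rightarrow> real set" where
  "Zg \<theta> = range (zg \<theta>)"

text \<open>f_t(n) = F_t(z_{n+1}) - F_t(z_n); F t is the distribution function of D_t.\<close>
definition fd :: "real \<Rightarrow> (nat \<Rightarrow> real \<Rightarrow> real) \<Rightarrow> nat \<Rightarrow> int \<Rightarrow> real" where
  "fd \<theta> F t n = F t (zg \<theta> (n + 1)) - F t (zg \<theta> n)"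

definition Cc :: "real \<Rightarrow> (nat \<Rightarrow> real) \<Rightarrow> (nat \<Rightarrow> real \<Rightarrow> real) \<Rightarrow> (nat \<Rightarrow> real measure)
    \<Rightarrow> nat \<Rightarrow> real \<Rightarrow> real" where
  "Cc \<alpha> c G \<mu> t y = (c t - \<alpha> * c (Suc t)) * y + G t y + \<alpha> * c (Suc t) * (\<integral>x. x \<partial>(\<mu> t))"

definition Cmin :: "(real \<Rightarrow> real) \<Rightarrow> real" where
  "Cmin g = (LEAST y. \<forall>x. g y \<le> g x)"

text \<open>S^U: n0 is the integer with z_{n0} < C^m <= z_{n0+1}, i.e. n0 = ceiling(C^m/theta) - 1.\<close>
definition SUg :: "real \<Rightarrow> (real \<Rightarrow> real) \<Rightarrow> real \<Rightarrow> real" where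
  "SUg \<theta> g k = (LEAST z. z \<in> Zg \<theta> \<and> Cmin g \<le> z \<and>
                       g z > g (zg \<theta> (\<lceil>Cmin g / \<theta>\<rceil> - 1)) + k)"

definition sLast :: "(real \<Rightarrow> real) \<Rightarrow> real \<Rightarrow> real" where
  "sLast g k = (SOME s. s \<le> Cmin g \<and> g s = g (Cmin g) + k)"

definition Ilow :: "real \<Rightarrow> (real \<Rightarrow> real) \<Rightarrow> real \<Rightarrow> real" where
  "Ilow \<theta> g Ibn = (GREATEST z. z \<in> Zg \<theta> \<and> z < min (Ibn - \<theta>) (Cmin g))"

definition Ibar :: "real \<Rightarrow> (real \<Rightarrow> real) \<Rightarrow> real \<Rightarrow> real \<Rightarrow> real" where
  "Ibar \<theta> g k I = (GREATEST z. z \<in> Zg \<theta> \<and> z \<le> I \<and> g z > g I + k) + \<theta>"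

definition Vfun :: "(real \<Rightarrow> real) \<Rightarrow> real \<Rightarrow> real \<Rightarrow> real \<Rightarrow> real \<Rightarrow> real" where
  "Vfun H S s k y = (if y < s then H S + k else H y)"

text \<open>One backward step: from the data at t+1 compute the data at t.
  The series sum_{n=-1}^infty is written with n = int j - 1, j = 0,1,2,...\<close>
definition dp_step :: "real \<Rightarrow> real \<Rightarrow> (nat \<Rightarrow> real) \<Rightarrow> (nat \<Rightarrow> real \<Rightarrow> real) \<Rightarrow> (nat \<Rightarrow> real \<Rightarrow> real)
    \<Rightarrow> nat \<Rightarrow> (real \<Rightarrow> real) \<times> real \<times> real \<times> real \<Rightarrow> (real \<Rightarrow> real) \<times> real \<times> real \<times> real" where
  "dp_step \<alpha> \<theta> K C F t prev =
     (case prev of (Hn, Sn, sn, Ibn) \<Rightarrow>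
       let V = Vfun Hn Sn sn (K (Suc t));
           H = (\<lambda>y. C t y + \<alpha> * (\<Sum>j. V (y - zg \<theta> (int j - 1)) * fd \<theta> F t (int j - 1)));
           I = Ilow \<theta> (C t) Ibn;
           Ib = Ibar \<theta> (C t) (K t) I;
           A = {z \<in> Zg \<theta>. I \<le> z \<and> z \<le> SUg \<theta> (C t) (K t)};
           S = (GREATEST z. z \<in> A \<and> H z = Min (H ` A));
           s = (if K t = 0 then S
                else (LEAST z. z \<in> Zg \<theta> \<and> Ib \<le> z \<and> z \<le> S \<and> H z \<le> H S + K t))
       in (H, S, s, Ib))"

text \<open>dp k holds (H_t, S_t, s_t, barI_t) for t = T-1-k.\<close>
primrec dp :: "nat \<Rightarrow> real \<Rightarrow> real \<Rightarrow> (nat \<Rightarrow> real) \<Rightarrow> (nat \<Rightarrow> real \<Rightarrow> real) \<Rightarrow> (nat \<Rightarrow> real \<Rightarrow> real)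
    \<Rightarrow> nat \<Rightarrow> (real \<Rightarrow> real) \<times> real \<times> real \<times> real" where
  "dp T \<alpha> \<theta> K C F 0 =
     (C (T - 1), Cmin (C (T - 1)), sLast (C (T - 1)) (K (T - 1)), sLast (C (T - 1)) (K (T - 1)))"
| "dp T \<alpha> \<theta> K C F (Suc k) = dp_step \<alpha> \<theta> K C F (T - 2 - k) (dp T \<alpha> \<theta> K C F k)"

definition Hf :: "nat \<Rightarrow> real \<Rightarrow> real \<Rightarrow> (nat \<Rightarrow> real) \<Rightarrow> (nat \<Rightarrow> real \<Rightarrow> real) \<Rightarrow> (nat \<Rightarrow> real \<Rightarrow> real)
    \<Rightarrow> nat \<Rightarrow> real \<Rightarrow> real" where
  "Hf T \<alpha> \<theta> K C F t = fst (dp T \<alpha> \<theta> K C F (T - 1 - t))"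

definition Sf :: "nat \<Rightarrow> real \<Rightarrow> real \<Rightarrow> (nat \<Rightarrow> real) \<Rightarrow> (nat \<Rightarrow> real \<Rightarrow> real) \<Rightarrow> (nat \<Rightarrow> real \<Rightarrow> real)
    \<Rightarrow> nat \<Rightarrow> real" where
  "Sf T \<alpha> \<theta> K C F t = fst (snd (dp T \<alpha> \<theta> K C F (T - 1 - t)))"

definition sf :: "nat \<Rightarrow> real \<Rightarrow> real \<Rightarrow> (nat \<Rightarrow> real) \<Rightarrow> (nat \<Rightarrow> real \<Rightarrow> real) \<Rightarrow> (nat \<Rightarrow> real \<Rightarrow> real)
    \<Rightarrow> nat \<Rightarrow> real" where
  "sf T \<alpha> \<theta> K C F t = fst (snd (snd (dp T \<alpha> \<theta> K C F (T - 1 - t))))"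

definition Vf :: "nat \<Rightarrow> real \<Rightarrow> real \<Rightarrow> (nat \<Rightarrow> real) \<Rightarrow> (nat \<Rightarrow> real \<Rightarrow> real) \<Rightarrow> (nat \<Rightarrow> real \<Rightarrow> real)
    \<Rightarrow> nat \<Rightarrow> real \<Rightarrow> real" where
  "Vf T \<alpha> \<theta> K C F t = Vfun (Hf T \<alpha> \<theta> K C F t) (Sf T \<alpha> \<theta> K C F t) (sf T \<alpha> \<theta> K C F t) (K t)"

text \<open>ub k holds (barpsi_t, barphi_t) for t = T-1-k; s is the sequence s_t.
  The integer n with z_{n-1} <= y - s_{t+1} < z_n satisfies n - 1 = floor((y - s_{t+1})/theta).\<close>
primrec ub :: "nat \<Rightarrow> real \<Rightarrow> real \<Rightarrow> (nat \<Rightarrow> real) \<Rightarrow> (nat \<Rightarrow> real \<Rightarrow> real) \<Rightarrow> (nat \<Rightarrow> real)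
    \<Rightarrow> nat \<Rightarrow> (real \<Rightarrow> real \<Rightarrow> real) \<times> (real \<Rightarrow> real \<Rightarrow> real)" where
  "ub T \<alpha> \<theta> \<gamma> F s 0 =
     ((\<lambda>x y. \<gamma> (T - 1) * x),
      (\<lambda>x y. if y < s (T - 1) then 0 else \<gamma> (T - 1) * x))"
| "ub T \<alpha> \<theta> \<gamma> F s (Suc k) =
     (let t = T - 2 - k;
          \<phi>n = snd (ub T \<alpha> \<theta> \<gamma> F s k);
          \<psi> = (\<lambda>x y. if y < s (Suc t) - \<theta> then \<gamma> t * x
                     else \<gamma> t * x + \<alpha> * (\<Sum>m \<in> {-1 .. \<lfloor>(y - s (Suc t)) / \<theta>\<rfloor>}.
                                              \<phi>n x (y - zg \<theta> m) * fd \<theta> F t m));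
          \<phi> = (\<lambda>x y. if y < s t then 0
                     else if y - x < s t then \<psi> (y - s t + \<theta>) y
                     else \<psi> x y)
      in (\<psi>, \<phi>))"

definition psibar :: "nat \<Rightarrow> real \<Rightarrow> real \<Rightarrow> (nat \<Rightarrow> real) \<Rightarrow> (nat \<Rightarrow> real \<Rightarrow> real) \<Rightarrow> (nat \<Rightarrow> real)
    \<Rightarrow> nat \<Rightarrow> real \<Rightarrow> real \<Rightarrow> real" where
  "psibar T \<alpha> \<theta> \<gamma> F s t = fst (ub T \<alpha> \<theta> \<gamma> F s (T - 1 - t))"

end

theory Submission
  imports Defs
begin

lemma Zg_iff: "x \<in> Zg \<theta> \<longleftrightarrow> (\<exists>m. x = of_int m * \<theta>)"
  by (auto simp: Zg_def zg_def)

lemma zg_in: "zg \<theta> m \<in> Zg \<theta>" by (simp add: Zg_def)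

lemma Zg_finite:
  assumes "\<theta> > 0" shows "finite (Zg \<theta> \<inter> {a..b})"
proof -
  have "Zg \<theta> \<inter> {a..b} \<subseteq> (\<lambda>m. of_int m * \<theta>) ` {\<lceil>a/\<theta>\<rceil>..\<lfloor>b/\<theta>\<rfloor>}"
  proof
    fix x assume "x \<in> Zg \<theta> \<inter> {a..b}"
    then obtain m where x: "x = of_int m * \<theta>" "a \<le> x" "x \<le> b" by (auto simp: Zg_iff)
    have "a/\<theta> \<le> of_int m" using x assms by (simp add: divide_le_eq)
    hence "\<lceil>a/\<theta>\<rceil> \<le> m" by (simp add: ceiling_le_iff)
    moreover have "of_int m \<le> b/\<theta>" using x assms by (simp add: le_divide_eq)
    hence "m \<le> \<lfloor>b/\<theta>\<rfloor>" by (simp add: le_floor_iff)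
    ultimately show "x \<in> (\<lambda>m. of_int m * \<theta>) ` {\<lceil>a/\<theta>\<rceil>..\<lfloor>b/\<theta>\<rfloor>}" using x by auto
  qed
  thus ?thesis by (rule finite_subset) simp
qed

lemma Zg_Greatest:
  assumes "\<theta> > 0" "\<And>x. P x \<Longrightarrow> x \<in> Zg \<theta>" "\<And>x. P x \<Longrightarrow> x \<le> B" "P w"
  shows "P (GREATEST x::real. P x)"
proof -
  let ?X = "{x. P x \<and> w \<le> x}"
  have fin: "finite ?X"
    by (rule finite_subset[OF _ Zg_finite[OF assms(1), of w B]]) (use assms in auto)
  have ne: "w \<in> ?X" using assms by auto
  let ?M = "Max ?X"
  have PM: "P ?M" using Max_in[OF fin] ne by blast
  have "\<And>y. P y \<Longrightarrow> y \<le> ?M"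
  proof -
    fix y assume "P y"
    show "y \<le> ?M"
    proof (cases "w \<le> y")
      case True thus ?thesis using Max_ge[OF fin] \<open>P y\<close> by auto
    next
      case False thus ?thesis using Max_ge[OF fin ne] by auto
    qed
  qed
  hence "(GREATEST x. P x) = ?M" using PM by (intro Greatest_equality) auto
  thus ?thesis using PM by simp
qed

lemma Zg_Least:
  assumes "\<theta> > 0" "\<And>x. P x \<Longrightarrow> x \<in> Zg \<theta>" "\<And>x. P x \<Longrightarrow> B \<le> x" "P w"
  shows "P (LEAST x::real. P x)"
proof -
  let ?X = "{x. P x \<and> x \<le> w}"
  have fin: "finite ?X"
    by (rule finite_subset[OF _ Zg_finite[OF assms(1), of B w]]) (use assms in auto)
  have ne: "w \<in> ?X" using assms by auto
  let ?M = "Min ?X"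
  have PM: "P ?M" using Min_in[OF fin] ne by blast
  have "\<And>y. P y \<Longrightarrow> ?M \<le> y"
  proof -
    fix y assume "P y"
    show "?M \<le> y"
    proof (cases "y \<le> w")
      case True thus ?thesis using Min_le[OF fin] \<open>P y\<close> by auto
    next
      case False thus ?thesis using Min_le[OF fin ne] by auto
    qed
  qed
  hence "(LEAST x. P x) = ?M" using PM by (intro Least_equality) auto
  thus ?thesis using PM by simp
qed

lemma Zg_below: "\<theta> > 0 \<Longrightarrow> \<exists>z\<in>Zg \<theta>. z \<le> b"
proof -
  assume th: "\<theta> > 0"
  have "of_int \<lfloor>b/\<theta>\<rfloor> * \<theta> \<le> b/\<theta> * \<theta>" using th by (intro mult_right_mono) auto
  also have "\<dots> = b" using th by simp
  finally have "zg \<theta> \<lfloor>b/\<theta>\<rfloor> \<le> b" by (simp add: zg_def)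
  thus ?thesis by (rule bexI[OF _ zg_in])
qed

lemma Zg_above: "\<theta> > 0 \<Longrightarrow> \<exists>z\<in>Zg \<theta>. b \<le> z"
proof -
  assume th: "\<theta> > 0"
  have "b = b/\<theta> * \<theta>" using th by simp
  also have "\<dots> \<le> of_int \<lceil>b/\<theta>\<rceil> * \<theta>" using th by (intro mult_right_mono) (auto simp: le_of_int_ceiling)
  finally have "b \<le> zg \<theta> \<lceil>b/\<theta>\<rceil>" by (simp add: zg_def)
  thus ?thesis by (rule bexI[OF _ zg_in])
qed

lemma Zg_lt: "\<theta> > 0 \<Longrightarrow> \<exists>z\<in>Zg \<theta>. z < b"
proof -
  assume th: "\<theta> > 0"
  obtain z where z: "z \<in> Zg \<theta>" "z \<le> b - \<theta>" using Zg_below[OF th] by blast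
  have "z < b" using z th by linarith
  thus ?thesis using z(1) by blast
qed

lemma Zg_diff: "x \<in> Zg \<theta> \<Longrightarrow> y \<in> Zg \<theta> \<Longrightarrow> x - y \<in> Zg \<theta>"
proof -
  assume "x \<in> Zg \<theta>" "y \<in> Zg \<theta>"
  then obtain a b where "x = of_int a * \<theta>" "y = of_int b * \<theta>" by (auto simp: Zg_iff)
  hence "x - y = zg \<theta> (a - b)" by (simp add: left_diff_distrib zg_def)
  thus ?thesis using zg_in by simp
qed

lemma Zg_step:
  assumes "\<theta> > 0" "x \<in> Zg \<theta>" "y \<in> Zg \<theta>" "x < y" shows "x \<le> y - \<theta>"
proof -
  obtain a b where ab: "x = of_int a * \<theta>" "y = of_int b * \<theta>" using assms by (auto simp: Zg_iff)
  hence "a < b" using assms by (simp add: mult_less_cancel_right)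
  hence "of_int a \<le> (of_int b - 1 :: real)" by linarith
  hence "of_int a * \<theta> \<le> (of_int b - 1) * \<theta>" using assms by (intro mult_right_mono) auto
  thus ?thesis using ab by (simp add: algebra_simps)
qed

lemma coerc_top:
  assumes "filterlim (g::real\<Rightarrow>real) at_top at_top" shows "\<exists>b. \<forall>x\<ge>b. g x > (c::real)"
proof -
  have "eventually (\<lambda>x. c + 1 \<le> g x) at_top" using assms by (simp add: filterlim_at_top)
  then obtain b where "\<forall>x\<ge>b. c + 1 \<le> g x" unfolding eventually_at_top_linorder by blast
  thus ?thesis by (intro exI[of _ b]) (auto intro: order_less_le_trans[OF less_add_one])
qed

lemma coerc_bot:
  assumes "filterlim (g::real\<Rightarrow>real) at_top at_bot" shows "\<exists>b. \<forall>x\<le>b. g x > (c::real)"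
proof -
  have "eventually (\<lambda>x. c + 1 \<le> g x) at_bot" using assms by (simp add: filterlim_at_top)
  then obtain b where "\<forall>x\<le>b. c + 1 \<le> g x" unfolding eventually_at_bot_linorder by blast
  thus ?thesis by (intro exI[of _ b]) (auto intro: order_less_le_trans[OF less_add_one])
qed


lemma dp_step_grid:
  assumes th: "\<theta> > 0" and Kt: "K t \<ge> 0" and ct: "filterlim (C t) at_top at_top"
    and cb: "filterlim (C t) at_top at_bot"
  shows "fst (snd (snd (dp_step \<alpha> \<theta> K C F t prev))) \<in> Zg \<theta>"
proof -
  obtain Hn Sn sn Ibn where prev: "prev = (Hn, Sn, sn, Ibn)" by (cases prev)
  define g where "g = C t"
  define V where "V = Vfun Hn Sn sn (K (Suc t))"
  define H where "H = (\<lambda>y. C t y + \<alpha> * (\<Sum>j. V (y - zg \<theta> (int j - 1)) * fd \<theta> F t (int j - 1)))"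
  define I where "I = Ilow \<theta> g Ibn"
  define Ib where "Ib = Ibar \<theta> g (K t) I"
  define SU where "SU = SUg \<theta> g (K t)"
  define A where "A = {z \<in> Zg \<theta>. I \<le> z \<and> z \<le> SU}"
  define S where "S = (GREATEST z. z \<in> A \<and> H z = Min (H ` A))"
  define s where "s = (if K t = 0 then S else (LEAST z. z \<in> Zg \<theta> \<and> Ib \<le> z \<and> z \<le> S \<and> H z \<le> H S + K t))"
  have eq: "fst (snd (snd (dp_step \<alpha> \<theta> K C F t prev))) = s"
    apply (unfold prev dp_step_def Let_def prod.case fst_conv snd_conv)
    apply (unfold s_def S_def A_def SU_def Ib_def I_def H_def V_def g_def)
    apply (rule refl)
    done
  have I: "I \<in> Zg \<theta> \<and> I < min (Ibn - \<theta>) (Cmin g)"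
  proof -
    obtain x0 where "x0 \<in> Zg \<theta>" "x0 < min (Ibn - \<theta>) (Cmin g)" using Zg_lt[OF th] by blast
    thus ?thesis unfolding I_def Ilow_def
      using Zg_Greatest[OF th, where P = "\<lambda>z. z \<in> Zg \<theta> \<and> z < min (Ibn - \<theta>) (Cmin g)" and B = "min (Ibn - \<theta>) (Cmin g)" and w = x0] by auto
  qed
  have SU: "SU \<in> Zg \<theta> \<and> Cmin g \<le> SU"
  proof -
    obtain b where b: "\<forall>x\<ge>b. g x > g (zg \<theta> (\<lceil>Cmin g / \<theta>\<rceil> - 1)) + K t"
      using coerc_top[OF ct] unfolding g_def by blast
    obtain x0 where "x0 \<in> Zg \<theta>" "max b (Cmin g) \<le> x0" using Zg_above[OF th] by blast
    thus ?thesis unfolding SU_def SUg_def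
      using Zg_Least[OF th, where P = "\<lambda>z. z \<in> Zg \<theta> \<and> Cmin g \<le> z \<and> g z > g (zg \<theta> (\<lceil>Cmin g / \<theta>\<rceil> - 1)) + K t" and B = "Cmin g" and w = x0] b by auto
  qed
  have Afin: "finite A"
    by (rule finite_subset[OF _ Zg_finite[OF th, of I SU]]) (auto simp: A_def)
  have IA: "I \<in> A" using I SU by (auto simp: A_def)
  have S: "S \<in> A"
  proof -
    have "Min (H ` A) \<in> H ` A" using Afin IA by (intro Min_in) auto
    then obtain u where hu: "u \<in> A" "H u = Min (H ` A)" by auto
    have "(\<lambda>z. z \<in> A \<and> H z = Min (H ` A)) (GREATEST x. (\<lambda>z. z \<in> A \<and> H z = Min (H ` A)) x)"
      by (rule Zg_Greatest[OF th, where B = SU and w = u]) (use hu in \<open>auto simp: A_def\<close>)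
    thus ?thesis unfolding S_def by simp
  qed
  have Ib: "Ib \<le> I"
  proof -
    obtain b where b: "\<forall>x\<le>b. g x > g I + K t"
      using coerc_bot[OF cb] unfolding g_def by blast
    obtain x0 where "x0 \<in> Zg \<theta>" "x0 \<le> min b I" using Zg_below[OF th] by blast
    hence w: "(GREATEST z. z \<in> Zg \<theta> \<and> z \<le> I \<and> g z > g I + K t) \<in> Zg \<theta> \<and>
        (GREATEST z. z \<in> Zg \<theta> \<and> z \<le> I \<and> g z > g I + K t) \<le> I \<and>
        g (GREATEST z. z \<in> Zg \<theta> \<and> z \<le> I \<and> g z > g I + K t) > g I + K t"
      using Zg_Greatest[OF th, where P = "\<lambda>z. z \<in> Zg \<theta> \<and> z \<le> I \<and> g z > g I + K t" and B = I and w = x0] b by auto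
    let ?w = "(GREATEST z. z \<in> Zg \<theta> \<and> z \<le> I \<and> g z > g I + K t)"
    have "?w \<noteq> I" using w Kt by auto
    hence "?w < I" using w by auto
    hence "?w \<le> I - \<theta>" using Zg_step[OF th] w I by blast
    thus ?thesis unfolding Ib_def Ibar_def by simp
  qed
  have "s \<in> Zg \<theta>"
  proof (cases "K t = 0")
    case True thus ?thesis using S by (simp add: s_def A_def)
  next
    case False
    have "S \<in> Zg \<theta>" "Ib \<le> S" using S Ib by (auto simp: A_def)
    hence "(LEAST z. z \<in> Zg \<theta> \<and> Ib \<le> z \<and> z \<le> S \<and> H z \<le> H S + K t) \<in> Zg \<theta>"
      using Zg_Least[OF th, where P = "\<lambda>z. z \<in> Zg \<theta> \<and> Ib \<le> z \<and> z \<le> S \<and> H z \<le> H S + K t"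
          and B = Ib and w = S] Kt by auto
    thus ?thesis using False by (simp add: s_def)
  qed
  thus ?thesis using eq by simp
qed


definition Rb :: "nat \<Rightarrow> real \<Rightarrow> real \<Rightarrow> (nat \<Rightarrow> real) \<Rightarrow> (nat \<Rightarrow> real \<Rightarrow> real) \<Rightarrow> (nat \<Rightarrow> real)
    \<Rightarrow> nat \<Rightarrow> real \<Rightarrow> real" where
  "Rb T \<alpha> \<theta> \<gamma> F s t y = \<gamma> t * \<theta> + \<theta> * (\<Sum>n = 1..T - 1 - t. \<alpha> ^ n * \<gamma> (t + n) *
                 (\<Prod>m = 0..n - 1. F (t + m) (y + real (m + 1) * \<theta> - s (t + m + 1))))"

lemma Rb_rec:
  assumes "t + 2 \<le> T"
  shows "Rb T \<alpha> \<theta> \<gamma> F s t y = \<gamma> t * \<theta> + \<alpha> * F t (y + \<theta> - s (Suc t)) * Rb T \<alpha> \<theta> \<gamma> F s (Suc t) (y + \<theta>)"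
proof -
  define L where "L = T - 2 - t"
  have L: "T - 1 - t = Suc L" "T - 1 - Suc t = L" using assms by (auto simp: L_def)
  define h where "h n = \<alpha> ^ n * \<gamma> (t + n) * (\<Prod>m = 0..n - 1. F (t + m) (y + real (m + 1) * \<theta> - s (t + m + 1)))" for n
  define h' where "h' n = \<alpha> ^ n * \<gamma> (Suc t + n) * (\<Prod>m = 0..n - 1. F (Suc t + m) (y + \<theta> + real (m + 1) * \<theta> - s (Suc t + m + 1)))" for n
  define c where "c = F t (y + \<theta> - s (Suc t))"
  have 1: "(\<Sum>n = 1..Suc L. h n) = h (Suc 0) + (\<Sum>i<L. h (Suc (Suc i)))"
    by (simp only: One_nat_def sum.atLeast1_atMost_eq sum.lessThan_Suc_shift)
  have 2: "(\<Sum>n = 1..L. h' n) = (\<Sum>i<L. h' (Suc i))" by (simp add: sum.atLeast1_atMost_eq)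
  have 3: "h (Suc (Suc i)) = \<alpha> * c * h' (Suc i)" for i
  proof -
    have "(\<Prod>m = 0..Suc i. F (t + m) (y + real (m + 1) * \<theta> - s (t + m + 1)))
        = c * (\<Prod>m = 0..i. F (Suc t + m) (y + \<theta> + real (m + 1) * \<theta> - s (Suc t + m + 1)))"
      by (simp add: prod.atLeast0_atMost_Suc_shift c_def algebra_simps del: prod.cl_ivl_Suc)
    thus ?thesis by (simp add: h_def h'_def)
  qed
  have 4: "h (Suc 0) = \<alpha> * c * \<gamma> (Suc t)" by (simp add: h_def c_def)
  have "Rb T \<alpha> \<theta> \<gamma> F s t y = \<gamma> t * \<theta> + \<theta> * (\<Sum>n = 1..Suc L. h n)"
    unfolding Rb_def L(1) h_def by simp
  also have "\<dots> = \<gamma> t * \<theta> + \<theta> * (\<alpha> * c * \<gamma> (Suc t) + \<alpha> * c * (\<Sum>i<L. h' (Suc i)))"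
    by (simp only: 1 3 4 sum_distrib_left)
  also have "\<dots> = \<gamma> t * \<theta> + \<alpha> * c * Rb T \<alpha> \<theta> \<gamma> F s (Suc t) (y + \<theta>)"
    unfolding Rb_def L(2) h'_def[symmetric] 2 by (simp add: algebra_simps)
  finally show ?thesis by (simp add: c_def)
qed

lemma Rb_mono:
  assumes th: "\<theta> > 0" and al: "\<alpha> \<ge> 0" and gam: "\<forall>t'<T. \<gamma> t' \<ge> 0"
    and Fm: "\<forall>t'<T. mono (F t') \<and> (\<forall>x. F t' x \<ge> 0)" and t: "t < T" and yy: "y \<le> y'"
  shows "0 \<le> Rb T \<alpha> \<theta> \<gamma> F s t y \<and> Rb T \<alpha> \<theta> \<gamma> F s t y \<le> Rb T \<alpha> \<theta> \<gamma> F s t y'"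
proof -
  have P: "0 \<le> (\<Prod>m = 0..n - 1. F (t + m) (y + real (m + 1) * \<theta> - s (t + m + 1))) \<and>
      (\<Prod>m = 0..n - 1. F (t + m) (y + real (m + 1) * \<theta> - s (t + m + 1)))
      \<le> (\<Prod>m = 0..n - 1. F (t + m) (y' + real (m + 1) * \<theta> - s (t + m + 1)))"
    if n: "n \<in> {1..T - 1 - t}" for n
  proof -
    have tm: "t + m < T" if "m \<in> {0..n - 1}" for m using that n by auto
    show ?thesis
    proof
      show "0 \<le> (\<Prod>m = 0..n - 1. F (t + m) (y + real (m + 1) * \<theta> - s (t + m + 1)))"
        using Fm tm by (intro prod_nonneg) auto
      show "(\<Prod>m = 0..n - 1. F (t + m) (y + real (m + 1) * \<theta> - s (t + m + 1)))
        \<le> (\<Prod>m = 0..n - 1. F (t + m) (y' + real (m + 1) * \<theta> - s (t + m + 1)))"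
      proof (rule prod_mono)
        fix m assume "m \<in> {0..n - 1}"
        hence "t + m < T" by (rule tm)
        thus "0 \<le> F (t + m) (y + real (m + 1) * \<theta> - s (t + m + 1)) \<and>
          F (t + m) (y + real (m + 1) * \<theta> - s (t + m + 1)) \<le> F (t + m) (y' + real (m + 1) * \<theta> - s (t + m + 1))"
          using Fm yy by (auto simp: mono_def)
      qed
    qed
  qed
  have G: "0 \<le> \<alpha> ^ n * \<gamma> (t + n)" if "n \<in> {1..T - 1 - t}" for n
    using that gam al by auto
  have "0 \<le> \<gamma> t" using gam t by auto
  moreover have "0 \<le> (\<Sum>n = 1..T - 1 - t. \<alpha> ^ n * \<gamma> (t + n) *
                 (\<Prod>m = 0..n - 1. F (t + m) (y + real (m + 1) * \<theta> - s (t + m + 1))))"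
  proof (rule sum_nonneg)
    fix n assume n: "n \<in> {1..T - 1 - t}"
    show "0 \<le> \<alpha> ^ n * \<gamma> (t + n) * (\<Prod>m = 0..n - 1. F (t + m) (y + real (m + 1) * \<theta> - s (t + m + 1)))"
      using G[OF n] P[OF n] by (rule_tac mult_nonneg_nonneg) auto
  qed
  moreover have "(\<Sum>n = 1..T - 1 - t. \<alpha> ^ n * \<gamma> (t + n) *
                 (\<Prod>m = 0..n - 1. F (t + m) (y + real (m + 1) * \<theta> - s (t + m + 1))))
      \<le> (\<Sum>n = 1..T - 1 - t. \<alpha> ^ n * \<gamma> (t + n) *
                 (\<Prod>m = 0..n - 1. F (t + m) (y' + real (m + 1) * \<theta> - s (t + m + 1))))"
  proof (rule sum_mono)
    fix n assume n: "n \<in> {1..T - 1 - t}"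
    show "\<alpha> ^ n * \<gamma> (t + n) * (\<Prod>m = 0..n - 1. F (t + m) (y + real (m + 1) * \<theta> - s (t + m + 1)))
      \<le> \<alpha> ^ n * \<gamma> (t + n) * (\<Prod>m = 0..n - 1. F (t + m) (y' + real (m + 1) * \<theta> - s (t + m + 1)))"
      using G[OF n] P[OF n] by (rule_tac mult_left_mono) auto
  qed
  ultimately show ?thesis using th unfolding Rb_def
    by (auto intro!: add_nonneg_nonneg mult_nonneg_nonneg mult_left_mono)
qed

lemma tele:
  fixes a b :: int and h :: "int \<Rightarrow> real"
  assumes "a \<le> b + 1"
  shows "(\<Sum>m\<in>{a..b}. h (m + 1) - h m) = h (b + 1) - h a"
proof -
  have "a - 1 \<le> b" using assms by simp
  thus ?thesis
  proof (induction b rule: int_ge_induct)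
    case base show ?case by simp
  next
    case (step i)
    have "{a..i + 1} = insert (i + 1) {a..i}" using step by auto
    thus ?case using step by simp
  qed
qed


lemma main_ind:
  assumes th: "\<theta> > 0" and al: "\<alpha> \<ge> 0" and T2: "T \<ge> 2"
    and gam: "\<forall>t'<T. \<gamma> t' \<ge> 0" and Fm: "\<forall>t'<T. mono (F t') \<and> (\<forall>x. F t' x \<ge> 0)"
    and sg: "\<forall>t'. t' \<le> T - 2 \<longrightarrow> s t' \<in> Zg \<theta>"
  shows "k \<le> T - 1 \<Longrightarrow>
    (\<forall>y\<in>Zg \<theta>. fst (ub T \<alpha> \<theta> \<gamma> F s k) \<theta> y \<le> Rb T \<alpha> \<theta> \<gamma> F s (T - 1 - k) y) \<and>
    (\<forall>y\<in>Zg \<theta>. s (T - 1 - k) \<le> y \<longrightarrow> snd (ub T \<alpha> \<theta> \<gamma> F s k) \<theta> y \<le> Rb T \<alpha> \<theta> \<gamma> F s (T - 1 - k) y)"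
proof (induction k)
  case 0
  have R: "Rb T \<alpha> \<theta> \<gamma> F s (T - Suc 0) y = \<gamma> (T - Suc 0) * \<theta>" for y by (simp add: Rb_def)
  have "0 \<le> \<gamma> (T - 1) * \<theta>" using gam th T2 by simp
  thus ?case by (simp add: R)
next
  case (Suc k)
  define t where "t = T - 2 - k"
  have tk: "T - 1 - k = Suc t" "T - 1 - Suc k = t" "t + 2 \<le> T" using Suc.prems by (auto simp: t_def)
  have IH: "\<forall>y\<in>Zg \<theta>. s (Suc t) \<le> y \<longrightarrow> snd (ub T \<alpha> \<theta> \<gamma> F s k) \<theta> y \<le> Rb T \<alpha> \<theta> \<gamma> F s (Suc t) y"
    using Suc.IH Suc.prems tk(1) by auto
  define \<phi>n where "\<phi>n = snd (ub T \<alpha> \<theta> \<gamma> F s k)"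
  define \<psi> where "\<psi> = (\<lambda>x y. if y < s (Suc t) - \<theta> then \<gamma> t * x
                     else \<gamma> t * x + \<alpha> * (\<Sum>m \<in> {-1 .. \<lfloor>(y - s (Suc t)) / \<theta>\<rfloor>}.
                                              \<phi>n x (y - zg \<theta> m) * fd \<theta> F t m))"
  define \<phi> where "\<phi> = (\<lambda>x y. if y < s t then 0
                     else if y - x < s t then \<psi> (y - s t + \<theta>) y
                     else \<psi> x y)"
  have ub: "ub T \<alpha> \<theta> \<gamma> F s (Suc k) = (\<psi>, \<phi>)"
    by (simp only: ub.simps Let_def \<psi>_def \<phi>_def \<phi>n_def t_def)
  have tT: "t < T" "Suc t < T" using tk by auto
  have Rnn: "0 \<le> Rb T \<alpha> \<theta> \<gamma> F s (Suc t) y" for y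
    using Rb_mono[OF th al gam Fm tT(2), of y y] by simp
  have Fnn: "0 \<le> F t x" for x using Fm tT by auto
  have Fmono: "x \<le> x' \<Longrightarrow> F t x \<le> F t x'" for x x' using Fm tT by (auto simp: mono_def)
  have Rrec: "Rb T \<alpha> \<theta> \<gamma> F s t y = \<gamma> t * \<theta> + \<alpha> * F t (y + \<theta> - s (Suc t)) * Rb T \<alpha> \<theta> \<gamma> F s (Suc t) (y + \<theta>)" for y
    by (rule Rb_rec[OF tk(3)])
  have psi: "\<psi> \<theta> y \<le> Rb T \<alpha> \<theta> \<gamma> F s t y" if y: "y \<in> Zg \<theta>" for y
  proof (cases "y < s (Suc t) - \<theta>")
    case True
    have "0 \<le> \<alpha> * F t (y + \<theta> - s (Suc t)) * Rb T \<alpha> \<theta> \<gamma> F s (Suc t) (y + \<theta>)"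
      using al Fnn Rnn by simp
    thus ?thesis using True by (simp add: \<psi>_def Rrec)
  next
    case False
    define N where "N = \<lfloor>(y - s (Suc t)) / \<theta>\<rfloor>"
    define R' where "R' = Rb T \<alpha> \<theta> \<gamma> F s (Suc t) (y + \<theta>)"
    have fdnn: "0 \<le> fd \<theta> F t m" for m
      unfolding fd_def using Fmono[of "zg \<theta> m" "zg \<theta> (m + 1)"] th by (simp add: zg_def algebra_simps)
    have each: "\<phi>n \<theta> (y - zg \<theta> m) * fd \<theta> F t m \<le> R' * fd \<theta> F t m" if m: "m \<in> {-1..N}" for m
    proof -
      have "of_int m \<le> (y - s (Suc t)) / \<theta>" using m unfolding N_def by (simp add: le_floor_iff)
      hence "of_int m * \<theta> \<le> y - s (Suc t)" using th by (simp add: le_divide_eq)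
      hence ge: "s (Suc t) \<le> y - zg \<theta> m" by (simp add: zg_def)
      have "-1 \<le> m" using m by simp
      hence "(-1) * \<theta> \<le> of_int m * \<theta>" using th by (intro mult_right_mono) auto
      hence le: "y - zg \<theta> m \<le> y + \<theta>" by (simp add: zg_def)
      have "y - zg \<theta> m \<in> Zg \<theta>" by (rule Zg_diff[OF y zg_in])
      hence "\<phi>n \<theta> (y - zg \<theta> m) \<le> Rb T \<alpha> \<theta> \<gamma> F s (Suc t) (y - zg \<theta> m)"
        using IH ge unfolding \<phi>n_def by blast
      also have "\<dots> \<le> R'" unfolding R'_def using Rb_mono[OF th al gam Fm tT(2) le] by simp
      finally show ?thesis using fdnn by (rule mult_right_mono)
    qed
    have "(\<Sum>m\<in>{-1..N}. \<phi>n \<theta> (y - zg \<theta> m) * fd \<theta> F t m) \<le> (\<Sum>m\<in>{-1..N}. R' * fd \<theta> F t m)"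
      by (rule sum_mono) (rule each)
    also have "\<dots> = R' * (\<Sum>m\<in>{-1..N}. fd \<theta> F t m)" by (simp add: sum_distrib_left)
    also have "(\<Sum>m\<in>{-1..N}. fd \<theta> F t m) = F t (zg \<theta> (N + 1)) - F t (zg \<theta> (-1))"
    proof -
      have "-1 \<le> (y - s (Suc t)) / \<theta>" using False th by (simp add: le_divide_eq)
      hence "-1 \<le> N" unfolding N_def by (simp add: le_floor_iff)
      hence "-1 \<le> N + 1" by simp
      from tele[OF this, of "\<lambda>m. F t (zg \<theta> m)"] show ?thesis unfolding fd_def by simp
    qed
    also have "R' * (F t (zg \<theta> (N + 1)) - F t (zg \<theta> (-1))) \<le> R' * F t (y + \<theta> - s (Suc t))"
    proof (rule mult_left_mono)
      have "of_int N \<le> (y - s (Suc t)) / \<theta>" unfolding N_def by simp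
      hence "of_int N * \<theta> \<le> y - s (Suc t)" using th by (simp add: le_divide_eq)
      hence "zg \<theta> (N + 1) \<le> y + \<theta> - s (Suc t)" by (simp add: zg_def algebra_simps)
      thus "F t (zg \<theta> (N + 1)) - F t (zg \<theta> (-1)) \<le> F t (y + \<theta> - s (Suc t))"
        using Fmono Fnn[of "zg \<theta> (-1)"] by fastforce
      show "0 \<le> R'" unfolding R'_def by (rule Rnn)
    qed
    finally have "(\<Sum>m\<in>{-1..N}. \<phi>n \<theta> (y - zg \<theta> m) * fd \<theta> F t m) \<le> R' * F t (y + \<theta> - s (Suc t))" .
    hence "\<psi> \<theta> y \<le> \<gamma> t * \<theta> + \<alpha> * (R' * F t (y + \<theta> - s (Suc t)))"
      using False al unfolding \<psi>_def N_def by (simp add: mult_left_mono)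
    thus ?thesis unfolding Rrec R'_def by (simp add: algebra_simps)
  qed
  have phi: "\<phi> \<theta> y \<le> Rb T \<alpha> \<theta> \<gamma> F s t y" if y: "y \<in> Zg \<theta>" "s t \<le> y" for y
  proof -
    have st: "s t \<in> Zg \<theta>" using sg tk by auto
    have Rt: "0 \<le> Rb T \<alpha> \<theta> \<gamma> F s t y" using Rb_mono[OF th al gam Fm tT(1), of y y] by simp
    show ?thesis
    proof (cases "y - \<theta> < s t")
      case True
      have "\<not> s t < y"
      proof
        assume "s t < y"
        hence "s t \<le> y - \<theta>" by (rule Zg_step[OF th st y(1)])
        thus False using True by simp
      qed
      hence "y = s t" using y by simp
      thus ?thesis using psi[OF y(1)] True by (simp add: \<phi>_def)
    next
      case False
      thus ?thesis using psi[OF y(1)] y by (simp add: \<phi>_def)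
    qed
  qed
  show ?case unfolding ub tk(2) fst_conv snd_conv using psi phi by blast
qed

theorem lemma4p9:
  fixes T :: nat and \<alpha> \<theta> :: real
    and c K \<gamma> :: "nat \<Rightarrow> real"
    and G :: "nat \<Rightarrow> real \<Rightarrow> real"
    and \<mu> :: "nat \<Rightarrow> real measure"
    and z :: real and t :: nat
  defines "C \<equiv> Cc \<alpha> c G \<mu>"
      and "F \<equiv> (\<lambda>t. cdf (\<mu> t))"
  assumes T2: "T \<ge> 2"
    and alpha: "0 < \<alpha>" "\<alpha> \<le> 1"
    and theta: "\<theta> > 0"
    and Kpos: "\<forall>t<T. K t \<ge> 0"
    and demand_law: "\<forall>t<T. real_distribution (\<mu> t)"
    and demand_nonneg: "\<forall>t<T. AE x in \<mu> t. 0 \<le> x"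
    and demand_mean: "\<forall>t<T. integrable (\<mu> t) (\<lambda>x. x)"
    and C_convex: "\<forall>t<T. convex_on UNIV (C t)"
    and C_coercive: "\<forall>t<T. filterlim (C t) at_top at_top \<and> filterlim (C t) at_top at_bot"
    and K_mono: "\<forall>t. t + 2 \<le> T \<longrightarrow> K t \<ge> \<alpha> * K (Suc t)"
    and C_lip: "\<forall>t<T. \<gamma> t \<ge> 0 \<and> (\<forall>x y. \<bar>C t x - C t y\<bar> \<le> \<gamma> t * \<bar>x - y\<bar>)"
    and finite_exp: "\<forall>t y. t + 2 \<le> T \<longrightarrow>
          summable (\<lambda>j. \<bar>Vf T \<alpha> \<theta> K C F (Suc t) (y - zg \<theta> (int j - 1)) * fd \<theta> F t (int j - 1)\<bar>)"
    and z: "z \<in> Zg \<theta>"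
    and t: "t \<le> T - 2"
  shows "psibar T \<alpha> \<theta> \<gamma> F (sf T \<alpha> \<theta> K C F) t \<theta> z
           \<le> \<gamma> t * \<theta> + \<theta> * (\<Sum>n = 1..T - 1 - t. \<alpha> ^ n * \<gamma> (t + n) *
                 (\<Prod>m = 0..n - 1. F (t + m) (z + real (m + 1) * \<theta> - sf T \<alpha> \<theta> K C F (t + m + 1))))"
proof -
  have th: "\<theta> > 0" using theta .
  have al: "\<alpha> \<ge> 0" using alpha by simp
  have gam: "\<forall>t'<T. \<gamma> t' \<ge> 0" using C_lip by auto
  have Fm: "\<forall>t'<T. mono (F t') \<and> (\<forall>x. F t' x \<ge> 0)"
  proof -
    have "mono (F t') \<and> (\<forall>x. F t' x \<ge> 0)" if "t' < T" for t'
    proof -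
      have rd: "real_distribution (\<mu> t')" using demand_law that by auto
      have "mono (F t')" unfolding F_def mono_def
        using finite_borel_measure.cdf_nondecreasing[OF real_distribution.finite_borel_measure_M[OF rd]] by blast
      moreover have "\<forall>x. F t' x \<ge> 0" unfolding F_def by (simp add: cdf_def measure_nonneg)
      ultimately show ?thesis by blast
    qed
    thus ?thesis by blast
  qed
  have sg: "\<forall>t'. t' \<le> T - 2 \<longrightarrow> sf T \<alpha> \<theta> K C F t' \<in> Zg \<theta>"
  proof (intro allI impI)
    fix t' assume t': "t' \<le> T - 2"
    have e1: "T - 1 - t' = Suc (T - 2 - t')" using t' T2 by simp
    have e2: "T - 2 - (T - 2 - t') = t'" using t' T2 by simp
    have "t' < T" using t' T2 by simp
    hence "K t' \<ge> 0" "filterlim (C t') at_top at_top" "filterlim (C t') at_top at_bot"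
      using Kpos C_coercive by auto
    from dp_step_grid[where K = K and C = C and t = t' and \<alpha> = \<alpha> and F = F and prev = "dp T \<alpha> \<theta> K C F (T - 2 - t')", OF th this]
    show "sf T \<alpha> \<theta> K C F t' \<in> Zg \<theta>"
      unfolding sf_def e1 dp.simps(2) e2 .
  qed
  have k: "T - 1 - t \<le> T - 1" by simp
  have e: "T - 1 - (T - 1 - t) = t" using t T2 by simp
  from main_ind[OF th al T2 gam Fm sg k] z
  have "psibar T \<alpha> \<theta> \<gamma> F (sf T \<alpha> \<theta> K C F) t \<theta> z \<le> Rb T \<alpha> \<theta> \<gamma> F (sf T \<alpha> \<theta> K C F) t z"
    unfolding psibar_def e by blast
  thus ?thesis unfolding Rb_def .
qed

end
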